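(* Let $s\ge 1$ be an integer. The sum of the sizes of all $(s,s+1)$-cores equals $$\frac{s(s-1)}{12}\binom{2s}{s}.$$ Equivalently, since there are $C_s=\frac{1}{s+1}\binom{2s}{s}$ such cores, the average size of an $(s,s+1)$-core is $\frac{(2s+2)(s-1)s}{24}=\frac{1}{2}\binom{s+1}{3}$.
   Context: A partition $\lambda=(\lambda_1,\dots,\lambda_m)$ is a weakly decreasing sequence of positive integers. Its size is $\lambda_1+\dots+\lambda_m$. The hook length of a cell $B$ of the Young diagram is the number of cells directly to the right of $B$ in its row or directly below $B$ in its column, including $B$ itself. $\lambda$ is an $s$-core if no cell has hook length equal to $s$. An $(s,t)$-core is a partition that is both an $s$-core and a $t$-core. *)

theory Defs
  imports Complex_Main
begin

definition is_partition :: "nat list \<Rightarrow> bool" where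
  "is_partition la \<longleftrightarrow> sorted_wrt (\<ge>) la \<and> (\<forall>x\<in>set la. 0 < x)"

definition psize :: "nat list \<Rightarrow> nat" where
  "psize la = sum_list la"

definition cells :: "nat list \<Rightarrow> (nat \<times> nat) set" where
  "cells la = {(i, j). i < length la \<and> j < la ! i}"

definition hook :: "nat list \<Rightarrow> nat \<Rightarrow> nat \<Rightarrow> nat" where
  "hook la i j = (la ! i - Suc j) + card {k. i < k \<and> k < length la \<and> j < la ! k} + 1"

definition is_core :: "nat \<Rightarrow> nat list \<Rightarrow> bool" where
  "is_core s la \<longleftrightarrow> (\<forall>(i, j)\<in>cells la. hook la i j \<noteq> s)"

end

theory Submission
  imports Defs "HOL-Computational_Algebra.Formal_Power_Series"
begin


definition Dop :: "'a::comm_ring_1 fps \<Rightarrow> 'a fps" where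
  "Dop f = Abs_fps (\<lambda>n. of_nat n * fps_nth f n)"

lemma Dop_nth[simp]: "fps_nth (Dop f) n = of_nat n * fps_nth f n"
  by (simp add: Dop_def)

lemma Dop_add[simp]: "Dop (f + g) = Dop f + Dop g"
  by (rule fps_ext) (simp add: algebra_simps)

lemma Dop_diff[simp]: "Dop (f - g) = Dop f - Dop g"
  by (rule fps_ext) (simp add: algebra_simps)

lemma Dop_one[simp]: "Dop 1 = 0"
  by (rule fps_ext) simp

lemma Dop_numeral[simp]: "Dop (numeral k) = 0"
  by (rule fps_ext) (simp add: fps_numeral_nth)

lemma Dop_X[simp]: "Dop fps_X = fps_X"
  by (rule fps_ext) simp

lemma Dop_mult: "Dop (f * g) = Dop f * g + f * Dop g"
proof (rule fps_ext)
  fix n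
  have "fps_nth (Dop (f * g)) n = (\<Sum>i=0..n. of_nat n * (fps_nth f i * fps_nth g (n - i)))"
    by (simp add: fps_mult_nth sum_distrib_left)
  also have "\<dots> = (\<Sum>i=0..n. (of_nat i * fps_nth f i) * fps_nth g (n - i) + fps_nth f i * (of_nat (n-i) * fps_nth g (n - i)))"
  proof (rule sum.cong)
    fix i assume "i \<in> {0..n}"
    then have "(of_nat n :: 'a) = of_nat i + of_nat (n - i)" by (simp flip: of_nat_add)
    then show "of_nat n * (fps_nth f i * fps_nth g (n - i)) = (of_nat i * fps_nth f i) * fps_nth g (n - i) + fps_nth f i * (of_nat (n-i) * fps_nth g (n - i))"
      by (simp add: algebra_simps)
  qed simp
  also have "\<dots> = fps_nth (Dop f * g + f * Dop g) n"
    by (simp add: fps_mult_nth sum.distrib)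
  finally show "fps_nth (Dop (f * g)) n = fps_nth (Dop f * g + f * Dop g) n" .
qed

lemma gf_main:
  fixes Cf T1 T2 A B Z :: "real fps"
  defines "X \<equiv> fps_X"
  assumes eC: "Cf = 1 + X*Cf*Cf"
  and eT1: "T1 = X*(T1*Cf + Dop Cf*Cf + Cf*T1)"
  and eT2: "T2 = X*(T2*Cf + Dop (Dop Cf)*Cf + Cf*T2 + 2*Dop T1*Cf + 2*T1*T1 + 2*Dop Cf*T1)"
  and eA: "A = X*(A*Cf + T1*Cf + Cf*A)"
  and eB: "2*B = X*(2*B*Cf + 2*T1*Cf + (Dop (Dop Cf) + Dop Cf)*Cf + 2*Cf*B + 2*(Dop Cf + Cf)*T1)"
  and eZ: "Z*(2-Cf) = Cf"
  shows "12*(Dop A + B) - 6*(T2 - T1) = Dop (Dop Z) - Dop Z"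
proof -
  define P where "P = 2 - Cf"
  define DC where "DC = Dop Cf"
  define DDC where "DDC = Dop DC"
  define DT1 where "DT1 = Dop T1"
  define DA where "DA = Dop A"
  define DZ where "DZ = Dop Z"
  define DDZ where "DDZ = Dop DZ"
  have dP: "Dop P = - DC" unfolding P_def DC_def
    by (rule fps_ext) (simp add: fps_numeral_nth)
  have dC0: "DC = X*Cf*Cf + X*(DC*Cf + Cf*DC)"
  proof -
    have "Dop Cf = Dop (1 + X*Cf*Cf)" using eC by simp
    then show ?thesis unfolding DC_def X_def by (simp add: Dop_mult algebra_simps)
  qed
  have r2: "DC*P = Cf*(Cf-1)" using eC dC0 unfolding P_def by algebra
  have d2: "DDC*P - DC*DC = DC*(Cf - 1) + Cf*DC"
  proof -
    have "Dop (DC*P) = Dop (Cf*(Cf-1))" using r2 by simp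
    then show ?thesis unfolding DDC_def by (simp add: Dop_mult dP DC_def algebra_simps)
  qed
  have t1: "T1*P^2 = Cf*(Cf-1)^2" using eC eT1 r2 unfolding P_def DC_def by algebra
  have dt1: "DT1*P^2 - T1*(2*P*DC) = DC*(Cf-1)^2 + Cf*(2*(Cf-1)*DC)"
  proof -
    have "Dop (T1*P*P) = Dop (Cf*(Cf-1)*(Cf-1))" using t1 by (simp add: power2_eq_square mult.assoc)
    then show ?thesis unfolding DT1_def by (simp add: Dop_mult dP DC_def algebra_simps power2_eq_square)
  qed
  have a3: "A*P^3 = Cf*(Cf-1)^3" using eC eA t1 r2 unfolding P_def by algebra
  have da: "DA*P^3 - A*(3*P^2*DC) = DC*(Cf-1)^3 + Cf*(3*(Cf-1)^2*DC)"
  proof -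
    have "Dop (A*P*P*P) = Dop (Cf*(Cf-1)*(Cf-1)*(Cf-1))" using a3 by (simp add: power3_eq_cube mult.assoc)
    then show ?thesis unfolding DA_def by (simp add: Dop_mult dP DC_def algebra_simps power2_eq_square power3_eq_cube)
  qed
  have dz: "DZ*P - Z*DC = DC"
  proof -
    have "Dop (Z*P) = Dop Cf" using eZ unfolding P_def by simp
    then show ?thesis unfolding DZ_def by (simp add: Dop_mult dP DC_def algebra_simps)
  qed
  have dz2: "DZ*P = DC*(1+Z)" using dz by (simp add: algebra_simps)
  have "DZ*P^3 = (DZ*P)*(P*P)" by (simp add: power3_eq_cube ac_simps)
  also have "\<dots> = DC*(1+Z)*(P*P)" using dz2 by simp
  also have "\<dots> = (DC*P)*(P + Z*P)" by (simp add: algebra_simps)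
  also have "\<dots> = Cf*(Cf-1)*(P + Cf)" using r2 eZ unfolding P_def by simp
  also have "\<dots> = 2*Cf*(Cf-1)" unfolding P_def by (simp add: algebra_simps)
  finally have dz3: "DZ*P^3 = 2*Cf*(Cf-1)" .
  have ddz: "DDZ*P^3 - DZ*(3*P^2*DC) = 2*DC*(Cf-1) + 2*Cf*DC"
  proof -
    have "Dop (DZ*P*P*P) = Dop (2*Cf*(Cf-1))" using dz3 by (simp add: power3_eq_cube mult.assoc)
    then show ?thesis unfolding DDZ_def by (simp add: Dop_mult dP DC_def algebra_simps power2_eq_square power3_eq_cube)
  qed
  have ddc3: "DDC*P^3 = Cf*(Cf-1)*(Cf*(Cf-1) + (2*Cf-1)*P)"
    using d2 r2 by algebra
  have dt14: "DT1*P^4 = 2*(Cf*(Cf-1)^2)*(Cf*(Cf-1)) + Cf*(Cf-1)*P*((Cf-1)^2 + 2*Cf*(Cf-1))"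
    using dt1 t1 r2 by algebra
  have t2a: "T2*Cf*P = Cf*(Cf-1)*(DDC + 2*DT1) + 2*(Cf-1)*(T1*T1 + DC*T1)"
    using eT2[folded DC_def DDC_def DT1_def] eC unfolding P_def by algebra
  have t25: "Cf*T2*P^5 = Cf*(Cf-1)*(DDC*P^3*P + 2*(DT1*P^4)) + 2*(Cf-1)*((T1*P^2)*(T1*P^2) + (DC*P)*(T1*P^2)*P)"
    using t2a by algebra
  have da5: "DA*P^5 = 3*(A*P^3)*(DC*P) + (DC*P)*P*((Cf-1)^3 + 3*Cf*(Cf-1)^2)"
    using da a3 by algebra
  have ba: "2*B*Cf*P = Cf*(Cf-1)*(4*T1 + DDC + DC) + 2*(Cf-1)*DC*T1"
    using eB[folded DC_def DDC_def] eC unfolding P_def by algebra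
  have b4: "2*B*Cf*P^4 = Cf*(Cf-1)*(4*(T1*P^2)*P + DDC*P^3 + (DC*P)*P^2) + 2*(Cf-1)*(DC*P)*(T1*P^2)"
    using ba by algebra
  have ddz5: "DDZ*P^5 = 3*(DZ*P^3)*(DC*P) + (DC*P)*P*(2*(Cf-1)+2*Cf)"
    using ddz dz3 by algebra
  note subst = ddc3 dt14 t1 a3 r2 dz3
  have ddc3': "DDC*P^3 = Cf*(Cf-1)*(Cf*(Cf-1) + (2*Cf-1)*P)" by (fact ddc3)
  have t25': "Cf*T2*P^5 = Cf*(Cf-1)*(Cf*(Cf-1)*(Cf*(Cf-1) + (2*Cf-1)*P)*P + 2*(2*(Cf*(Cf-1)^2)*(Cf*(Cf-1)) + Cf*(Cf-1)*P*((Cf-1)^2 + 2*Cf*(Cf-1))))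
       + 2*(Cf-1)*((Cf*(Cf-1)^2)*(Cf*(Cf-1)^2) + (Cf*(Cf-1))*(Cf*(Cf-1)^2)*P)"
    using t25 unfolding ddc3 dt14 t1 r2 .
  have da5': "DA*P^5 = 3*(Cf*(Cf-1)^3)*(Cf*(Cf-1)) + (Cf*(Cf-1))*P*((Cf-1)^3 + 3*Cf*(Cf-1)^2)"
    using da5 unfolding a3 r2 .
  have b4': "2*B*Cf*P^4 = Cf*(Cf-1)*(4*(Cf*(Cf-1)^2)*P + Cf*(Cf-1)*(Cf*(Cf-1) + (2*Cf-1)*P) + (Cf*(Cf-1))*P^2) + 2*(Cf-1)*(Cf*(Cf-1))*(Cf*(Cf-1)^2)"
    using b4 unfolding ddc3 t1 r2 .
  have ddz5': "DDZ*P^5 = 3*(2*Cf*(Cf-1))*(Cf*(Cf-1)) + (Cf*(Cf-1))*P*(2*(Cf-1)+2*Cf)"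
    using ddz5 unfolding dz3 r2 .
  have "2*Cf*P^5 * (12*(DA + B) - 6*(T2 - T1) - (DDZ - DZ)) =
        24*Cf*(DA*P^5) + 12*(2*B*Cf*P^4)*P - 12*(Cf*T2*P^5) + 12*Cf*(T1*P^2)*P^3 - 2*Cf*(DDZ*P^5) + 2*Cf*(DZ*P^3)*P^2"
    by algebra
  also have "\<dots> = 0"
    unfolding da5' b4' t25' t1 ddz5' dz3 unfolding P_def by algebra
  finally have "(2*Cf*P^5) * (12*(DA + B) - 6*(T2 - T1) - (DDZ - DZ)) = 0" .
  moreover have "P \<noteq> 0"
  proof
    assume "P = 0"
    then have "fps_nth P 0 = 0" by simp
    moreover have "fps_nth Cf 0 = 1" using arg_cong[OF eC, of "\<lambda>f. fps_nth f 0"] unfolding X_def by simp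
    ultimately show False unfolding P_def by (simp add: fps_numeral_nth)
  qed
  moreover have "Cf \<noteq> 0"
  proof
    assume "Cf = 0"
    then have "fps_nth Cf 0 = 0" by simp
    moreover have "fps_nth Cf 0 = 1" using arg_cong[OF eC, of "\<lambda>f. fps_nth f 0"] unfolding X_def by simp
    ultimately show False by simp
  qed
  ultimately show ?thesis unfolding DA_def DDZ_def DZ_def by simp
qed


definition valid :: "nat list \<Rightarrow> bool" where
  "valid a \<longleftrightarrow> (a = [] \<or> hd a = 0) \<and> successively (\<lambda>x y. y \<le> Suc x) a"

definition CL :: "nat \<Rightarrow> nat list set" where
  "CL n = {a. length a = n \<and> valid a}"

definition glue :: "nat list \<Rightarrow> nat list \<Rightarrow> nat list" where
  "glue b c = 0 # map Suc b @ c"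

lemma valid_glue:
  assumes "valid b" "valid c" shows "valid (glue b c)"
  using assms unfolding valid_def glue_def
  by (auto simp: successively_Cons successively_append_iff successively_map hd_map last_map
      hd_append split: if_splits)

lemma glue_inj:
  assumes "glue b c = glue b' c'" "length b = length b'"
  shows "b = b' \<and> c = c'"
proof -
  have "map Suc b @ c = map Suc b' @ c'" using assms(1) unfolding glue_def by simp
  then have "map Suc b = map Suc b' \<and> c = c'" using assms(2) by (simp add: append_eq_append_conv)
  then show ?thesis by (simp add: inj_map_eq_map)
qed

lemma glue_len_b:
  assumes "valid c"
  shows "length (takeWhile (\<lambda>x. 0 < x) (tl (glue b c))) = length b"
proof -
  have "takeWhile (\<lambda>x. 0 < x) c = []"
    using assms unfolding valid_def by (cases c) auto
  moreover have "takeWhile (\<lambda>x. 0<x) (map Suc b @ c) = map Suc b @ takeWhile (\<lambda>x. 0<x) c"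
    by (rule takeWhile_append2) auto
  ultimately show ?thesis unfolding glue_def by simp
qed

lemma CL_0: "CL 0 = {[]}"
  unfolding CL_def valid_def by auto

lemma CL_Suc: "CL (Suc n) = (\<Union>j\<in>{..n}. (\<lambda>(b,c). glue b c) ` (CL j \<times> CL (n-j)))"
proof (rule set_eqI, rule iffI)
  fix a assume a: "a \<in> CL (Suc n)"
  then obtain rest where ar: "a = 0 # rest" and lr: "length rest = n"
    and sr: "successively (\<lambda>x y. y \<le> Suc x) (0 # rest)"
    unfolding CL_def valid_def by (cases a) auto
  define pre where "pre = takeWhile (\<lambda>x. 0 < x) rest"
  define c where "c = dropWhile (\<lambda>x. 0 < x) rest"
  define b where "b = map (\<lambda>x. x - 1) pre"
  have rpc: "rest = pre @ c" unfolding pre_def c_def by simp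
  have pos: "\<And>x. x \<in> set pre \<Longrightarrow> 0 < x" unfolding pre_def by (auto dest: set_takeWhileD)
  have mb: "map Suc b = pre" unfolding b_def by (rule map_idI[THEN trans[OF map_map]]) (use pos in auto)
  have srest: "successively (\<lambda>x y. y \<le> Suc x) rest" using sr by (auto simp: successively_Cons)
  have spre: "successively (\<lambda>x y. y \<le> Suc x) pre" and sc: "successively (\<lambda>x y. y \<le> Suc x) c"
    using srest unfolding rpc by (auto simp: successively_append_iff)
  have "c = [] \<or> hd c = 0" using hd_dropWhile[of "\<lambda>x. 0<x" rest] unfolding c_def
    by (cases "dropWhile (\<lambda>x. 0 < x) rest = []") auto
  then have vc: "valid c"
    using sc unfolding valid_def by auto
  have vb: "valid b"
  proof -
    have "successively (\<lambda>x y. y \<le> Suc x) b"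
      unfolding b_def successively_map
      by (rule successively_mono[OF spre]) (use pos in auto)
    moreover have "b = [] \<or> hd b = 0"
    proof (cases pre)
      case Nil then show ?thesis by (simp add: b_def)
    next
      case (Cons p ps)
      then have "rest = p # ps @ c" using rpc by simp
      then have "p \<le> 1" using sr by (simp add: successively_Cons)
      moreover have "0 < p" using pos Cons by simp
      ultimately show ?thesis using Cons by (simp add: b_def)
    qed
    ultimately show ?thesis unfolding valid_def by blast
  qed
  have "a = glue b c" unfolding glue_def ar rpc mb ..
  moreover have "length b \<le> n" "length c = n - length b"
    using lr unfolding rpc b_def by auto
  ultimately show "a \<in> (\<Union>j\<in>{..n}. (\<lambda>(b,c). glue b c) ` (CL j \<times> CL (n-j)))"
    using vb vc unfolding CL_def by (auto intro!: bexI[of _ "length b"] image_eqI[of _ _ "(b,c)"])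
next
  fix a assume "a \<in> (\<Union>j\<in>{..n}. (\<lambda>(b,c). glue b c) ` (CL j \<times> CL (n-j)))"
  then show "a \<in> CL (Suc n)" unfolding CL_def using valid_glue by (auto simp: glue_def)
qed

lemma finite_CL: "finite (CL n)"
proof (induction n rule: less_induct)
  case (less n)
  show ?case
  proof (cases n)
    case 0 then show ?thesis by (simp add: CL_0)
  next
    case (Suc m)
    then show ?thesis using less unfolding Suc CL_Suc by auto
  qed
qed

lemma sum_CL_Suc:
  fixes f :: "nat list \<Rightarrow> 'a::comm_monoid_add"
  shows "(\<Sum>a\<in>CL (Suc n). f a) = (\<Sum>j\<le>n. \<Sum>b\<in>CL j. \<Sum>c\<in>CL (n-j). f (glue b c))"
proof -
  have "(\<Sum>a\<in>CL (Suc n). f a) = (\<Sum>j\<le>n. \<Sum>a\<in>(\<lambda>(b,c). glue b c) ` (CL j \<times> CL (n-j)). f a)"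
    unfolding CL_Suc
  proof (rule sum.UNION_disjoint)
    show "\<forall>j\<in>{..n}. \<forall>k\<in>{..n}. j \<noteq> k \<longrightarrow>
      (\<lambda>(b,c). glue b c) ` (CL j \<times> CL (n-j)) \<inter> (\<lambda>(b,c). glue b c) ` (CL k \<times> CL (n-k)) = {}"
    proof (intro ballI impI)
      fix j k assume "j \<in> {..n}" "k \<in> {..n}" "j \<noteq> k"
      show "(\<lambda>(b,c). glue b c) ` (CL j \<times> CL (n-j)) \<inter> (\<lambda>(b,c). glue b c) ` (CL k \<times> CL (n-k)) = {}"
      proof (rule ccontr)
        assume "\<not> ?thesis"
        then obtain b c b' c' where "b \<in> CL j" "c \<in> CL (n-j)" "b' \<in> CL k" "c' \<in> CL (n-k)"
          "glue b c = glue b' c'" by auto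
        then have "length b = length b'" using glue_len_b[of c b] glue_len_b[of c' b']
          unfolding CL_def by auto
        then show False using \<open>b \<in> CL j\<close> \<open>b' \<in> CL k\<close> \<open>j \<noteq> k\<close> unfolding CL_def by auto
      qed
    qed
  qed (auto simp: finite_CL)
  also have "\<dots> = (\<Sum>j\<le>n. \<Sum>(b,c)\<in>CL j \<times> CL (n-j). f (glue b c))"
  proof (rule sum.cong[OF refl])
    fix j
    have "inj_on (\<lambda>(b,c). glue b c) (CL j \<times> CL (n-j))"
      by (rule inj_onI) (auto simp: CL_def dest: glue_inj)
    then show "(\<Sum>a\<in>(\<lambda>(b,c). glue b c) ` (CL j \<times> CL (n-j)). f a) = (\<Sum>(b,c)\<in>CL j \<times> CL (n-j). f (glue b c))"
      by (simp add: sum.reindex case_prod_beta')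
  qed
  also have "\<dots> = (\<Sum>j\<le>n. \<Sum>b\<in>CL j. \<Sum>c\<in>CL (n-j). f (glue b c))"
    by (simp add: sum.cartesian_product)
  finally show ?thesis .
qed


definition sa :: "nat list \<Rightarrow> nat" where
  "sa a = sum_list (map (\<lambda>x. x choose 2) a)"

fun ws :: "nat list \<Rightarrow> nat" where
  "ws [] = 0"
| "ws (x # xs) = ws xs + sum_list xs"

lemma sum_list_map_Suc: "sum_list (map Suc b) = sum_list b + length b"
  by (induction b) auto

lemma ws_append: "ws (xs @ ys) = ws xs + ws ys + length xs * sum_list ys"
  by (induction xs) auto

lemma ws_map_Suc: "2 * ws (map Suc b) + length b = 2 * ws b + length b * length b"
  by (induction b) (auto simp: sum_list_map_Suc algebra_simps)

lemma choose2_Suc: "Suc a choose 2 = (a choose 2) + a"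
  by (simp add: numeral_2_eq_2)

lemma sa_map_Suc: "sa (map Suc b) = sa b + sum_list b"
  unfolding sa_def by (induction b) (auto simp: choose2_Suc)

lemma sum_glue: "sum_list (glue b c) = sum_list b + length b + sum_list c"
  unfolding glue_def by (simp add: sum_list_map_Suc)

lemma sa_glue: "sa (glue b c) = sa b + sum_list b + sa c"
  using sa_map_Suc[of b] unfolding glue_def by (simp add: sa_def)

lemma ws_glue: "2 * ws (glue b c) = 2 * ws b + 2 * sum_list b + length b * (length b + 1)
    + 2 * ws c + 2 * (length b + 1) * sum_list c"
  using ws_map_Suc[of b] unfolding glue_def by (simp add: ws_append sum_list_map_Suc algebra_simps)

lemma L1:
  fixes u v :: "'a \<Rightarrow> real" and k :: real
  assumes "finite B" "finite C"
  shows "(\<Sum>b\<in>B. \<Sum>c\<in>C. u b + k + v c)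
     = real (card C) * sum u B + k * real (card B) * real (card C) + real (card B) * sum v C"
  by (simp add: sum.distrib sum_distrib_left sum_distrib_right algebra_simps)

lemma L2:
  fixes u v :: "'a \<Rightarrow> real" and k :: real
  assumes "finite B" "finite C"
  shows "(\<Sum>b\<in>B. \<Sum>c\<in>C. (u b + k + v c)^2)
     = real (card C) * (\<Sum>b\<in>B. (u b)^2) + k^2 * real (card B) * real (card C) + real (card B) * (\<Sum>c\<in>C. (v c)^2)
       + 2 * k * real (card C) * sum u B + 2 * sum u B * sum v C + 2 * k * real (card B) * sum v C"
proof -
  have e: "\<And>b c. (u b + k + v c)^2 = ((u b)^2 + k^2 + 2*k*u b) + (2*u b) * v c + ((v c)^2 + 2*k*v c)"
    by (simp add: power2_eq_square algebra_simps)
  show ?thesis unfolding e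
    by (simp add: sum.distrib sum_distrib_left sum_distrib_right algebra_simps)
qed

definition cnt :: "nat \<Rightarrow> real" where "cnt n = real (card (CL n))"
definition t1 :: "nat \<Rightarrow> real" where "t1 n = (\<Sum>a\<in>CL n. real (sum_list a))"
definition t2 :: "nat \<Rightarrow> real" where "t2 n = (\<Sum>a\<in>CL n. (real (sum_list a))^2)"
definition ta :: "nat \<Rightarrow> real" where "ta n = (\<Sum>a\<in>CL n. real (sa a))"
definition tb :: "nat \<Rightarrow> real" where "tb n = (\<Sum>a\<in>CL n. real (ws a))"

lemma cnt_eq: "cnt n = (\<Sum>a\<in>CL n. 1)" unfolding cnt_def by simp

lemma inner_cnt: "(\<Sum>b\<in>CL j. \<Sum>c\<in>CL m. (1::real)) = cnt j * cnt m"
  unfolding cnt_def by simp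

lemma inner_t1: "(\<Sum>b\<in>CL j. \<Sum>c\<in>CL m. real (sum_list (glue b c)))
    = cnt m * t1 j + real j * cnt j * cnt m + cnt j * t1 m"
proof -
  have "(\<Sum>b\<in>CL j. \<Sum>c\<in>CL m. real (sum_list (glue b c))) =
        (\<Sum>b\<in>CL j. \<Sum>c\<in>CL m. real (sum_list b) + real j + real (sum_list c))"
    by (intro sum.cong refl) (auto simp: sum_glue CL_def)
  also have "\<dots> = cnt m * t1 j + real j * cnt j * cnt m + cnt j * t1 m"
    unfolding L1[OF finite_CL finite_CL] cnt_def t1_def by simp
  finally show ?thesis .
qed

lemma inner_t2: "(\<Sum>b\<in>CL j. \<Sum>c\<in>CL m. (real (sum_list (glue b c)))^2)
    = cnt m * t2 j + (real j)^2 * cnt j * cnt m + cnt j * t2 m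
      + 2 * real j * cnt m * t1 j + 2 * t1 j * t1 m + 2 * real j * cnt j * t1 m" (is "_ = ?R")
proof -
  have "(\<Sum>b\<in>CL j. \<Sum>c\<in>CL m. (real (sum_list (glue b c)))^2) =
        (\<Sum>b\<in>CL j. \<Sum>c\<in>CL m. (real (sum_list b) + real j + real (sum_list c))^2)"
    by (intro sum.cong refl) (auto simp: sum_glue CL_def)
  also have "\<dots> = ?R"
    unfolding L2[OF finite_CL finite_CL] cnt_def t1_def t2_def by simp
  finally show ?thesis .
qed

lemma inner_ta: "(\<Sum>b\<in>CL j. \<Sum>c\<in>CL m. real (sa (glue b c)))
    = cnt m * (ta j + t1 j) + cnt j * ta m"
proof -
  have "(\<Sum>b\<in>CL j. \<Sum>c\<in>CL m. real (sa (glue b c))) =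
        (\<Sum>b\<in>CL j. \<Sum>c\<in>CL m. (real (sa b) + real (sum_list b)) + 0 + real (sa c))"
    by (intro sum.cong refl) (auto simp: sa_glue)
  also have "\<dots> = cnt m * (ta j + t1 j) + cnt j * ta m"
    unfolding L1[OF finite_CL finite_CL] cnt_def t1_def ta_def by (simp add: sum.distrib)
  finally show ?thesis .
qed

lemma inner_tb: "(\<Sum>b\<in>CL j. \<Sum>c\<in>CL m. 2 * real (ws (glue b c)))
    = cnt m * (2 * tb j + 2 * t1 j) + real j * (real j + 1) * cnt j * cnt m + cnt j * (2 * tb m + 2 * (real j + 1) * t1 m)" (is "_ = ?rhs")
proof -
  have "(\<Sum>b\<in>CL j. \<Sum>c\<in>CL m. 2 * real (ws (glue b c))) =
        (\<Sum>b\<in>CL j. \<Sum>c\<in>CL m. (2 * real (ws b) + 2 * real (sum_list b)) + real j * (real j + 1)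
            + (2 * real (ws c) + 2 * (real j + 1) * real (sum_list c)))"
  proof (intro sum.cong refl)
    fix b c assume "b \<in> CL j" "c \<in> CL m"
    then have "length b = j" unfolding CL_def by simp
    then show "2 * real (ws (glue b c)) = (2 * real (ws b) + 2 * real (sum_list b)) + real j * (real j + 1)
            + (2 * real (ws c) + 2 * (real j + 1) * real (sum_list c))"
      using arg_cong[OF ws_glue[of b c], of real] by (simp add: algebra_simps)
  qed
  also have "\<dots> = ?rhs"
    unfolding L1[OF finite_CL finite_CL] cnt_def t1_def tb_def
    by (simp add: sum.distrib sum_distrib_left)
  finally show ?thesis .
qed


lemma central_step_nat: "Suc n * ((2 * Suc n) choose Suc n) = (4 * n + 2) * ((2*n) choose n)"
proof -
  have e1: "Suc n * (Suc (Suc (2*n)) choose Suc n) = Suc (Suc (2*n)) * (Suc (2*n) choose n)"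
    by (rule Suc_times_binomial)
  have e2: "Suc n * (Suc (2*n) choose Suc n) = Suc (2*n) * ((2*n) choose n)"
    by (rule Suc_times_binomial)
  have e3: "Suc n * (Suc (n + n) choose Suc n) = Suc n * (Suc (n + n) choose n)"
    using Suc_times_binomial_add[of n n] .
  then have e3': "(Suc (2*n) choose Suc n) = (Suc (2*n) choose n)"
    unfolding mult_2 by (metis mult_left_cancel nat.simps(3))
  have "Suc n * (Suc n * ((2 * Suc n) choose Suc n)) = Suc n * ((4 * n + 2) * ((2*n) choose n))"
  proof -
    have "Suc n * (Suc n * ((2 * Suc n) choose Suc n)) = Suc n * (Suc (Suc (2*n)) * (Suc (2*n) choose n))"
      using e1 by (simp only: mult_Suc_right[symmetric] add_2_eq_Suc' mult_2 add_Suc_right add_Suc)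
    also have "\<dots> = Suc (Suc (2*n)) * (Suc n * (Suc (2*n) choose Suc n))" using e3' by (simp only: mult.left_commute)
    also have "\<dots> = Suc (Suc (2*n)) * (Suc (2*n) * ((2*n) choose n))" using e2 by (simp only:)
    also have "\<dots> = Suc n * ((4 * n + 2) * ((2*n) choose n))" by (simp add: algebra_simps)
    finally show ?thesis .
  qed
  then show ?thesis by (metis mult_left_cancel nat.simps(3))
qed

lemma central_step: "real (Suc n) * real ((2 * Suc n) choose Suc n) = (4 * real n + 2) * real ((2*n) choose n)"
proof -
  have h: "real (Suc n * ((2 * Suc n) choose Suc n)) = real ((4 * n + 2) * ((2*n) choose n))"
    by (simp only: central_step_nat)
  show ?thesis using h unfolding of_nat_mult by (simp del: binomial_Suc_Suc of_nat_Suc)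
qed

lemma z_coeff:
  fixes Cf Z :: "real fps"
  assumes eC: "Cf = 1 + fps_X*Cf*Cf" and eZ: "Z*(2-Cf) = Cf"
  shows "fps_nth Z n = real ((2*n) choose n)"
proof -
  define X :: "real fps" where "X = fps_X"
  define P where "P = 2 - Cf"
  define DC where "DC = Dop Cf"
  define DZ where "DZ = Dop Z"
  have eC': "Cf = 1 + X*Cf*Cf" using eC unfolding X_def .
  have dP: "Dop P = - DC" unfolding P_def DC_def
    by (rule fps_ext) (simp add: fps_numeral_nth)
  have dC0: "DC = X*Cf*Cf + X*(DC*Cf + Cf*DC)"
  proof -
    have "Dop Cf = Dop (1 + X*Cf*Cf)" using eC' by simp
    then show ?thesis unfolding DC_def X_def by (simp add: Dop_mult algebra_simps)
  qed
  have r2: "DC*P = Cf*(Cf-1)" using eC' dC0 unfolding P_def by algebra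
  have dz: "DZ*P - Z*DC = DC"
  proof -
    have "Dop (Z*P) = Dop Cf" using eZ unfolding P_def by simp
    then show ?thesis unfolding DZ_def by (simp add: Dop_mult dP DC_def algebra_simps)
  qed
  have c0: "fps_nth Cf 0 = 1" using arg_cong[OF eC, of "\<lambda>f. fps_nth f 0"] by simp
  have "Cf \<noteq> 0"
  proof
    assume "Cf = 0" then have "fps_nth Cf 0 = 0" by simp
    then show False using c0 by simp
  qed
  moreover have "P \<noteq> 0"
  proof
    assume "P = 0" then have "fps_nth P 0 = 0" by simp
    then show False using c0 unfolding P_def by (simp add: fps_numeral_nth)
  qed
  ultimately have "Cf*Cf*P \<noteq> 0" by simp
  moreover have "(Cf*Cf*P) * ((1 - 4*X)*DZ - 2*(X*Z)) = 0"
    using eC' r2 eZ dz unfolding P_def by algebra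
  ultimately have e: "(1 - 4*X)*DZ = 2*(X*Z)" by simp
  have z0: "fps_nth Z 0 = 1"
    using arg_cong[OF eZ, of "\<lambda>f. fps_nth f 0"] c0 by (simp add: fps_numeral_nth)
  have rec: "real (Suc n) * fps_nth Z (Suc n) = (4 * real n + 2) * fps_nth Z n" for n
  proof -
    have "fps_nth ((1 - 4*X)*DZ) (Suc n) = fps_nth (2*(X*Z)) (Suc n)" using e by simp
    then show ?thesis unfolding X_def DZ_def
      by (simp add: algebra_simps fps_numeral_fps_const del: of_nat_Suc)
  qed
  show ?thesis
  proof (induction n)
    case 0 then show ?case using z0 by simp
  next
    case (Suc n)
    have "real (Suc n) * fps_nth Z (Suc n) = real (Suc n) * real ((2 * Suc n) choose Suc n)"
      using rec[of n] Suc central_step[of n] by simp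
    then show ?case by (simp del: of_nat_Suc)
  qed
qed


lemma X_eq:
  fixes G H :: "'a::comm_ring_1 fps"
  assumes "fps_nth G 0 = 0" "\<And>n. fps_nth G (Suc n) = fps_nth H n"
  shows "G = fps_X * H"
proof (rule fps_ext)
  fix n show "fps_nth G n = fps_nth (fps_X * H) n"
    using assms by (cases n) auto
qed

lemma rc_cnt: "cnt (Suc n) = (\<Sum>j\<le>n. cnt j * cnt (n-j))"
  unfolding cnt_eq[of "Suc n"] sum_CL_Suc inner_cnt by simp

lemma rc_t1: "t1 (Suc n) = (\<Sum>j\<le>n. cnt (n-j) * t1 j + real j * cnt j * cnt (n-j) + cnt j * t1 (n-j))"
  unfolding t1_def[of "Suc n"] sum_CL_Suc inner_t1[unfolded t1_def] t1_def by simp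

lemma rc_t2: "t2 (Suc n) = (\<Sum>j\<le>n. cnt (n-j) * t2 j + (real j)^2 * cnt j * cnt (n-j) + cnt j * t2 (n-j)
      + 2 * real j * cnt (n-j) * t1 j + 2 * t1 j * t1 (n-j) + 2 * real j * cnt j * t1 (n-j))"
  unfolding t2_def[of "Suc n"] sum_CL_Suc inner_t2[unfolded t2_def] t2_def by simp

lemma rc_ta: "ta (Suc n) = (\<Sum>j\<le>n. cnt (n-j) * (ta j + t1 j) + cnt j * ta (n-j))"
  unfolding ta_def[of "Suc n"] sum_CL_Suc inner_ta[unfolded ta_def] ta_def by simp

lemma rc_tb: "2 * tb (Suc n) = (\<Sum>j\<le>n. cnt (n-j) * (2 * tb j + 2 * t1 j) + real j * (real j + 1) * cnt j * cnt (n-j)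
     + cnt j * (2 * tb (n-j) + 2 * (real j + 1) * t1 (n-j)))"
proof -
  have "2 * tb (Suc n) = (\<Sum>a\<in>CL (Suc n). 2 * real (ws a))"
    unfolding tb_def by (simp add: sum_distrib_left)
  then show ?thesis unfolding sum_CL_Suc inner_tb by simp
qed

lemma CL0_vals: "cnt 0 = 1" "t1 0 = 0" "t2 0 = 0" "ta 0 = 0" "tb 0 = 0"
  by (simp_all add: cnt_def t1_def t2_def ta_def tb_def CL_0 sa_def)

lemma total_gf:
  "12 * (real n * ta n + tb n) - 6 * (t2 n - t1 n) = (real n ^ 2 - real n) * real ((2*n) choose n)"
proof -
  define Cf :: "real fps" where "Cf = Abs_fps cnt"
  define T1 :: "real fps" where "T1 = Abs_fps t1"
  define T2 :: "real fps" where "T2 = Abs_fps t2"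
  define A :: "real fps" where "A = Abs_fps ta"
  define B :: "real fps" where "B = Abs_fps tb"
  have eC: "Cf = 1 + fps_X*(Cf*Cf)"
  proof (rule fps_ext)
    fix n show "fps_nth Cf n = fps_nth (1 + fps_X*(Cf*Cf)) n"
    proof (cases n)
      case 0 then show ?thesis by (simp add: Cf_def CL0_vals)
    next
      case (Suc m)
      have "fps_nth (1 + fps_X*(Cf*Cf)) (Suc m) = fps_nth (Cf*Cf) m" by simp
      also have "\<dots> = fps_nth Cf (Suc m)"
        by (simp add: Cf_def rc_cnt fps_mult_nth atLeast0AtMost)
      finally show ?thesis using Suc by simp
    qed
  qed
  have eT1: "T1 = fps_X*(T1*Cf + Dop Cf*Cf + Cf*T1)"
    apply (rule X_eq)
     apply (simp add: T1_def CL0_vals)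
    unfolding fps_add_nth fps_mult_nth Dop_nth T1_def Cf_def fps_nth_Abs_fps rc_t1 atLeast0AtMost
    by (simp add: sum.distrib algebra_simps)
  have eT2: "T2 = fps_X*(T2*Cf + Dop (Dop Cf)*Cf + Cf*T2 + (Dop T1*Cf + Dop T1*Cf) + (T1*T1 + T1*T1) + (Dop Cf*T1 + Dop Cf*T1))"
    apply (rule X_eq)
     apply (simp add: T2_def CL0_vals)
    unfolding fps_add_nth fps_mult_nth Dop_nth T1_def T2_def Cf_def fps_nth_Abs_fps rc_t2 atLeast0AtMost
    by (simp add: sum.distrib sum_distrib_left algebra_simps power2_eq_square)
  have eA: "A = fps_X*(A*Cf + T1*Cf + Cf*A)"
    apply (rule X_eq)
     apply (simp add: A_def CL0_vals)
    unfolding fps_add_nth fps_mult_nth Dop_nth A_def T1_def Cf_def fps_nth_Abs_fps rc_ta atLeast0AtMost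
    by (simp add: sum.distrib algebra_simps)
  have eB: "B + B = fps_X*(B*Cf + B*Cf + T1*Cf + T1*Cf + Dop (Dop Cf)*Cf + Dop Cf*Cf + Cf*B + Cf*B
       + Dop Cf*T1 + Dop Cf*T1 + Cf*T1 + Cf*T1)"
  proof (rule X_eq)
    fix n
    have "fps_nth (B + B) (Suc n) = 2 * tb (Suc n)" unfolding fps_add_nth B_def by simp
    also have "\<dots> = fps_nth (B*Cf + B*Cf + T1*Cf + T1*Cf + Dop (Dop Cf)*Cf + Dop Cf*Cf + Cf*B + Cf*B
       + Dop Cf*T1 + Dop Cf*T1 + Cf*T1 + Cf*T1) n"
      unfolding rc_tb fps_add_nth fps_mult_nth Dop_nth B_def T1_def Cf_def fps_nth_Abs_fps atLeast0AtMost
      by (simp add: sum.distrib sum_distrib_left algebra_simps power2_eq_square)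
    finally show "fps_nth (B + B) (Suc n) = fps_nth (B*Cf + B*Cf + T1*Cf + T1*Cf + Dop (Dop Cf)*Cf + Dop Cf*Cf + Cf*B + Cf*B
       + Dop Cf*T1 + Dop Cf*T1 + Cf*T1 + Cf*T1) n" .
  qed (simp add: B_def CL0_vals)
  have c0: "fps_nth Cf 0 = 1" by (simp add: Cf_def CL0_vals)
  define Z where "Z = Cf * inverse (2 - Cf)"
  have eZ: "Z*(2-Cf) = Cf"
  proof -
    have "fps_nth (2 - Cf) 0 \<noteq> 0" using c0 by (simp add: fps_numeral_nth)
    then have "inverse (2 - Cf) * (2 - Cf) = 1" by (rule inverse_mult_eq_1)
    then show ?thesis unfolding Z_def by (simp add: mult.assoc)
  qed
  have eC': "Cf = 1 + fps_X*Cf*Cf" using eC by (simp add: mult.assoc)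
  have main: "12*(Dop A + B) - 6*(T2 - T1) = Dop (Dop Z) - Dop Z"
  proof (rule gf_main[OF eC' eT1 _ eA _ eZ])
    show "T2 = fps_X*(T2*Cf + Dop (Dop Cf)*Cf + Cf*T2 + 2*Dop T1*Cf + 2*T1*T1 + 2*Dop Cf*T1)"
      using eT2 by algebra
    show "2*B = fps_X*(2*B*Cf + 2*T1*Cf + (Dop (Dop Cf) + Dop Cf)*Cf + 2*Cf*B + 2*(Dop Cf + Cf)*T1)"
      using eB by algebra
  qed
  have "fps_nth (12*(Dop A + B) - 6*(T2 - T1)) n = fps_nth (Dop (Dop Z) - Dop Z) n"
    using main by simp
  then show ?thesis
    using z_coeff[OF eC' eZ, of n]
    by (simp add: fps_numeral_fps_const A_def B_def T1_def T2_def power2_eq_square algebra_simps)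
qed


definition bet :: "nat list \<Rightarrow> nat \<Rightarrow> nat" where
  "bet la i = la ! i + (length la - Suc i)"

definition beta :: "nat list \<Rightarrow> nat set" where
  "beta la = bet la ` {..<length la}"

lemma part_mono:
  assumes "is_partition la" "i \<le> k" "k < length la"
  shows "la ! k \<le> la ! i"
proof (cases "i = k")
  case False
  then show ?thesis using assms sorted_wrt_nth_less[of "(\<ge>)" la i k]
    unfolding is_partition_def by auto
qed simp

lemma part_pos:
  assumes "is_partition la" "k < length la"
  shows "0 < la ! k"
  using assms unfolding is_partition_def by auto

lemma bet_dec:
  assumes "is_partition la" "i \<le> k" "k < length la"
  shows "bet la k + (k - i) \<le> bet la i"
  using part_mono[OF assms] assms(2,3) unfolding bet_def by arith

lemma bet_pos:
  assumes "is_partition la" "k < length la"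
  shows "length la - k \<le> bet la k"
  using part_pos[OF assms] assms(2) unfolding bet_def by arith

lemma hook_gap:
  assumes P: "is_partition la" and i: "i < length la" and j: "j < la ! i"
  shows "hook la i j \<le> bet la i \<and> bet la i - hook la i j \<notin> beta la"
proof -
  define m where "m = length la"
  define K where "K = {k. k < m \<and> j < la ! k}"
  have fK: "finite K" unfolding K_def by simp
  have iK: "i \<in> K" unfolding K_def m_def using i j by simp
  define k0 where "k0 = Max K"
  have k0K: "k0 \<in> K" unfolding k0_def by (rule Max_in[OF fK]) (use iK in auto)
  have ik0: "i \<le> k0" unfolding k0_def using fK iK by simp
  have k0m: "k0 < m" and jk0: "j < la ! k0" using k0K unfolding K_def by auto
  have charK: "\<And>k. k < m \<Longrightarrow> j < la ! k \<longleftrightarrow> k \<le> k0"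
  proof -
    fix k assume km: "k < m"
    show "j < la ! k \<longleftrightarrow> k \<le> k0"
    proof
      assume "j < la ! k" then have "k \<in> K" unfolding K_def using km by simp
      then show "k \<le> k0" unfolding k0_def using fK by simp
    next
      assume "k \<le> k0" then have "la ! k0 \<le> la ! k" using part_mono[OF P _ k0m[unfolded m_def]] by simp
      then show "j < la ! k" using jk0 by simp
    qed
  qed
  have S: "{k. i < k \<and> k < length la \<and> j < la ! k} = {i<..k0}"
    using charK k0m unfolding m_def by auto
  have hk: "hook la i j = la ! i - j + (k0 - i)"
    unfolding hook_def S using j by simp
  have bi: "bet la i = la ! i + (m - Suc i)" unfolding bet_def m_def ..
  have le: "hook la i j \<le> bet la i" using hk bi ik0 k0m j by simp
  have cval: "bet la i - hook la i j = j + (m - Suc k0)" using hk bi ik0 k0m j by simp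
  have "j + (m - Suc k0) \<notin> beta la"
  proof
    assume "j + (m - Suc k0) \<in> beta la"
    then obtain k where km: "k < m" and bk: "bet la k = j + (m - Suc k0)"
      unfolding beta_def m_def by auto
    show False
    proof (cases "k \<le> k0")
      case True
      then have "j < la ! k" using charK km by simp
      then show False using bk True k0m unfolding bet_def m_def by simp
    next
      case False
      then have "la ! k \<le> j" using charK[OF km] by (simp add: not_less[symmetric])
      then show False using bk False km unfolding bet_def m_def by simp
    qed
  qed
  then show ?thesis using le cval by simp
qed

lemma gap_hook:
  assumes P: "is_partition la" and i: "i < length la" and c: "c < bet la i" and cn: "c \<notin> beta la"
  shows "\<exists>j < la ! i. hook la i j = bet la i - c"
proof -
  define m where "m = length la"
  define K where "K = {k. k < m \<and> c < bet la k}"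
  have fK: "finite K" unfolding K_def by simp
  have iK: "i \<in> K" unfolding K_def m_def using i c by simp
  define k0 where "k0 = Max K"
  have k0K: "k0 \<in> K" unfolding k0_def by (rule Max_in[OF fK]) (use iK in auto)
  have ik0: "i \<le> k0" unfolding k0_def using fK iK by simp
  have k0m: "k0 < m" and ck0: "c < bet la k0" using k0K unfolding K_def by auto
  have charK: "\<And>k. k < m \<Longrightarrow> c < bet la k \<longleftrightarrow> k \<le> k0"
  proof -
    fix k assume km: "k < m"
    show "c < bet la k \<longleftrightarrow> k \<le> k0"
    proof
      assume "c < bet la k" then have "k \<in> K" unfolding K_def using km by simp
      then show "k \<le> k0" unfolding k0_def using fK by simp
    next
      assume "k \<le> k0" then have "bet la k0 + (k0 - k) \<le> bet la k" using bet_dec[OF P _ k0m[unfolded m_def]] by simp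
      then show "c < bet la k" using ck0 by simp
    qed
  qed
  have notin: "\<And>k. k < m \<Longrightarrow> bet la k \<noteq> c" using cn unfolding beta_def m_def by auto
  have after: "\<And>k. k0 < k \<Longrightarrow> k < m \<Longrightarrow> bet la k + (k - k0) \<le> c"
  proof -
    fix k assume a: "k0 < k" "k < m"
    have "bet la (Suc k0) < c" using charK[of "Suc k0"] notin[of "Suc k0"] a by fastforce
    moreover have "bet la k + (k - Suc k0) \<le> bet la (Suc k0)" using bet_dec[OF P, of "Suc k0" k] a unfolding m_def by simp
    ultimately show "bet la k + (k - k0) \<le> c" using a by simp
  qed
  have cge: "m - Suc k0 \<le> c"
  proof (cases "Suc k0 < m")
    case True
    have "bet la (m - 1) + (m - 1 - k0) \<le> c" using after[of "m - 1"] True by simp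
    moreover have "1 \<le> bet la (m - 1)" using bet_pos[OF P, of "m - 1"] True unfolding m_def by simp
    ultimately show ?thesis by simp
  next
    case False then show ?thesis by simp
  qed
  define j where "j = c - (m - Suc k0)"
  have bi: "bet la i = la ! i + (m - Suc i)" unfolding bet_def m_def ..
  have bik0: "bet la k0 + (k0 - i) \<le> bet la i" using bet_dec[OF P ik0 k0m[unfolded m_def]] .
  have jl: "j < la ! i" unfolding j_def using bi bik0 ck0 cge ik0 k0m by simp
  have chj: "\<And>k. i < k \<Longrightarrow> k < m \<Longrightarrow> j < la ! k \<longleftrightarrow> k \<le> k0"
  proof -
    fix k assume a: "i < k" "k < m"
    have bk: "bet la k = la ! k + (m - Suc k)" unfolding bet_def m_def ..
    show "j < la ! k \<longleftrightarrow> k \<le> k0"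
    proof
      assume "j < la ! k"
      show "k \<le> k0"
      proof (rule ccontr)
        assume "\<not> k \<le> k0"
        then have "bet la k + (k - k0) \<le> c" using after a by simp
        then show False using \<open>j < la ! k\<close> bk a cge unfolding j_def by simp
      qed
    next
      assume "k \<le> k0"
      then have "bet la k0 + (k0 - k) \<le> bet la k" using bet_dec[OF P _ k0m[unfolded m_def]] by simp
      then show "j < la ! k" using bk ck0 cge a \<open>k \<le> k0\<close> k0m unfolding j_def by simp
    qed
  qed
  have S: "{k. i < k \<and> k < length la \<and> j < la ! k} = {i<..k0}"
    using chj k0m unfolding m_def by auto
  have "hook la i j = la ! i - j + (k0 - i)"
    unfolding hook_def S using jl by simp
  also have "\<dots> = bet la i - c" unfolding j_def using bi cge ik0 k0m jl[unfolded j_def] by simp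
  finally show ?thesis using jl by blast
qed

lemma core_iff:
  assumes P: "is_partition la" and t: "1 \<le> t"
  shows "is_core t la \<longleftrightarrow> (\<forall>b\<in>beta la. t \<le> b \<longrightarrow> b - t \<in> beta la)"
proof
  assume core: "is_core t la"
  show "\<forall>b\<in>beta la. t \<le> b \<longrightarrow> b - t \<in> beta la"
  proof (intro ballI impI, rule ccontr)
    fix b assume b: "b \<in> beta la" "t \<le> b" "b - t \<notin> beta la"
    then obtain i where i: "i < length la" "b = bet la i" unfolding beta_def by auto
    have "b - t < bet la i" using b t i by simp
    then obtain j where "j < la ! i" "hook la i j = bet la i - (b - t)"
      using gap_hook[OF P i(1) _ b(3)] by blast
    moreover have "bet la i - (b - t) = t" using b i by simp
    ultimately show False using core i unfolding is_core_def cells_def by auto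
  qed
next
  assume cl: "\<forall>b\<in>beta la. t \<le> b \<longrightarrow> b - t \<in> beta la"
  have "hook la i j \<noteq> t" if "i < length la" "j < la ! i" for i j
  proof
    assume "hook la i j = t"
    then show False using hook_gap[OF P, of i j] cl that unfolding beta_def by auto
  qed
  then show "is_core t la" unfolding is_core_def cells_def by auto
qed


lemma bet_inj: "is_partition la \<Longrightarrow> inj_on (bet la) {..<length la}"
proof (rule inj_onI)
  fix i k assume P: "is_partition la" and i: "i \<in> {..<length la}" and k: "k \<in> {..<length la}"
    and e: "bet la i = bet la k"
  show "i = k"
  proof (rule ccontr)
    assume "i \<noteq> k"
    then consider "i < k" | "k < i" by arith
    then show False
    proof cases
      case 1 then show False using bet_dec[OF P, of i k] e k by simp
    next
      case 2 then show False using bet_dec[OF P, of k i] e i by simp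
    qed
  qed
qed

lemma card_beta: "is_partition la \<Longrightarrow> card (beta la) = length la"
proof -
  assume P: "is_partition la"
  show ?thesis unfolding beta_def using card_image[OF bet_inj[OF P]] by simp
qed

lemma gauss2: "2 * (\<Sum>i<m. i) = m * (m - 1::nat)"
  by (induction m) (auto simp: algebra_simps)

lemma sum_beta: "is_partition la \<Longrightarrow> 2 * \<Sum>(beta la) = 2 * psize la + length la * (length la - 1)"
proof -
  assume P: "is_partition la"
  define m where "m = length la"
  have "\<Sum>(beta la) = (\<Sum>i<m. bet la i)"
    unfolding beta_def m_def using sum.reindex[OF bet_inj[OF P], of id] by simp
  also have "\<dots> = (\<Sum>i<m. la ! i) + (\<Sum>i<m. m - Suc i)"
    unfolding bet_def m_def by (rule sum.distrib)
  also have "(\<Sum>i<m. m - Suc i) = (\<Sum>i<m. i)"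
    using sum.nat_diff_reindex[of id m] by simp
  also have "(\<Sum>i<m. la ! i) = psize la"
    unfolding psize_def m_def sum_list_sum_nth atLeast0LessThan ..
  finally show ?thesis using gauss2[of m] unfolding m_def by simp
qed

definition toPart :: "nat set \<Rightarrow> nat list" where
  "toPart H = map (\<lambda>i. rev (sorted_list_of_set H) ! i - (card H - Suc i)) [0..<card H]"

lemma strict_dec:
  fixes xs :: "nat list"
  assumes "sorted_wrt (>) xs" "i \<le> k" "k < length xs"
  shows "xs ! k + (k - i) \<le> xs ! i"
  using assms(2,3)
proof (induction k)
  case 0 then show ?case by simp
next
  case (Suc k)
  show ?case
  proof (cases "i = Suc k")
    case False
    then have "i \<le> k" using Suc by simp
    then have "xs ! k + (k - i) \<le> xs ! i" using Suc by simp
    moreover have "xs ! Suc k < xs ! k" using sorted_wrt_nth_less[OF assms(1), of k "Suc k"] Suc by simp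
    ultimately show ?thesis using \<open>i \<le> k\<close> by simp
  qed simp
qed

lemma toPart_beta:
  assumes P: "is_partition la"
  shows "toPart (beta la) = la"
proof -
  define m where "m = length la"
  define L0 where "L0 = map (bet la) [0..<m]"
  have sL0: "sorted_wrt (>) L0"
    unfolding sorted_wrt_iff_nth_less
  proof (intro allI impI)
    fix i k assume a: "i < k" "k < length L0"
    then have "k < m" unfolding L0_def by simp
    then have "bet la k + (k - i) \<le> bet la i" using bet_dec[OF P, of i k] a unfolding m_def by simp
    then show "L0 ! k < L0 ! i" using a \<open>k < m\<close> unfolding L0_def by simp
  qed
  have setL0: "set L0 = beta la" unfolding L0_def beta_def m_def by auto
  have "sorted_wrt (<) (rev L0)" using sL0 by (simp add: sorted_wrt_rev)
  then have srL0: "sorted (rev L0)" and drL0: "distinct (rev L0)" by (simp_all add: strict_sorted_iff)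
  have "sorted_list_of_set (beta la) = rev L0"
  proof -
    have "sorted (rev L0)" by (fact srL0)
    moreover have "distinct (rev L0)" by (fact drL0)
    ultimately show ?thesis unfolding setL0[symmetric]
      using sorted_list_of_set_sort_remdups[of "rev L0"] by (simp add: distinct_remdups_id sorted_sort_id)
  qed
  moreover have "card (beta la) = m" using card_beta[OF P] unfolding m_def .
  ultimately have "toPart (beta la) = map (\<lambda>i. L0 ! i - (m - Suc i)) [0..<m]"
    unfolding toPart_def by simp
  also have "\<dots> = map (\<lambda>i. la ! i) [0..<m]"
    by (rule map_cong) (auto simp: L0_def bet_def m_def)
  also have "\<dots> = la" unfolding m_def by (rule map_nth)
  finally show ?thesis .
qed

lemma beta_toPart:
  assumes fH: "finite H" and H0: "0 \<notin> H"
  shows "is_partition (toPart H) \<and> beta (toPart H) = H"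
proof -
  define L where "L = rev (sorted_list_of_set H)"
  define m where "m = card H"
  have lL: "length L = m" unfolding L_def m_def by simp
  have sL: "sorted_wrt (>) L" unfolding L_def
    using sorted_list_of_set.strict_sorted_key_list_of_set[of H] by (simp add: sorted_wrt_rev)
  have setL: "set L = H" unfolding L_def using fH by simp
  have lowb: "\<And>i. i < m \<Longrightarrow> m - i \<le> L ! i"
  proof -
    fix i assume i: "i < m"
    have "L ! (m - 1) + (m - 1 - i) \<le> L ! i" using strict_dec[OF sL, of i "m - 1"] i lL by simp
    moreover have "L ! (m - 1) \<in> H" using setL lL i nth_mem[of "m - 1" L] by simp
    then have "1 \<le> L ! (m - 1)" using H0 by (cases "L ! (m - 1)") auto
    ultimately show "m - i \<le> L ! i" using i by simp
  qed
  have tp: "toPart H = map (\<lambda>i. L ! i - (m - Suc i)) [0..<m]"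
    unfolding toPart_def L_def m_def ..
  define la where "la = toPart H"
  have len: "length la = m" unfolding la_def tp by simp
  have nth: "\<And>i. i < m \<Longrightarrow> la ! i = L ! i - (m - Suc i)" unfolding la_def tp by simp
  have pos: "\<forall>x\<in>set la. 0 < x"
  proof
    fix x assume "x \<in> set la"
    then obtain i where "i < m" "x = la ! i" using len by (auto simp: in_set_conv_nth)
    then show "0 < x" using nth[of i] lowb[of i] by simp
  qed
  have srt: "sorted_wrt (\<ge>) la"
    unfolding sorted_wrt_iff_nth_less
  proof (intro allI impI)
    fix i k assume "i < k" "k < length la"
    then have a: "i < k" "k < m" using len by auto
    have "L ! k + (k - i) \<le> L ! i" using strict_dec[OF sL, of i k] a lL by simp
    then show "la ! k \<le> la ! i" using nth[of i] nth[of k] a lowb[of i] lowb[of k] by simp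
  qed
  have P: "is_partition la" unfolding is_partition_def using srt pos by simp
  have "beta la = (\<lambda>i. L ! i) ` {..<m}"
    unfolding beta_def len
  proof (rule image_cong[OF refl])
    fix i assume "i \<in> {..<m}"
    then show "bet la i = L ! i" unfolding bet_def len using nth[of i] lowb[of i] by simp
  qed
  also have "\<dots> = set L" using lL by (auto simp: in_set_conv_nth)
  finally show ?thesis using P setL unfolding la_def by simp
qed


lemma succ_nth: "successively P xs \<longleftrightarrow> (\<forall>i. Suc i < length xs \<longrightarrow> P (xs!i) (xs!Suc i))"
proof (induction xs)
  case (Cons x xs)
  show ?case
  proof (cases xs)
    case Nil then show ?thesis by simp
  next
    case (Cons y ys)
    have "(\<forall>i. Suc i < length (x # y # ys) \<longrightarrow> P ((x # y # ys) ! i) ((x # y # ys) ! Suc i)) \<longleftrightarrow>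
          P x y \<and> (\<forall>i. Suc i < length (y # ys) \<longrightarrow> P ((y # ys) ! i) ((y # ys) ! Suc i))"
    proof
      assume h: "\<forall>i. Suc i < length (x # y # ys) \<longrightarrow> P ((x # y # ys) ! i) ((x # y # ys) ! Suc i)"
      show "P x y \<and> (\<forall>i. Suc i < length (y # ys) \<longrightarrow> P ((y # ys) ! i) ((y # ys) ! Suc i))"
      proof
        show "P x y" using h[rule_format, of 0] by simp
        show "\<forall>i. Suc i < length (y # ys) \<longrightarrow> P ((y # ys) ! i) ((y # ys) ! Suc i)"
        proof (intro allI impI)
          fix i assume "Suc i < length (y # ys)"
          then show "P ((y # ys) ! i) ((y # ys) ! Suc i)" using h[rule_format, of "Suc i"] by simp
        qed
      qed
    next
      assume h: "P x y \<and> (\<forall>i. Suc i < length (y # ys) \<longrightarrow> P ((y # ys) ! i) ((y # ys) ! Suc i))"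
      show "\<forall>i. Suc i < length (x # y # ys) \<longrightarrow> P ((x # y # ys) ! i) ((x # y # ys) ! Suc i)"
      proof (intro allI impI)
        fix i assume "Suc i < length (x # y # ys)"
        then show "P ((x # y # ys) ! i) ((x # y # ys) ! Suc i)"
          using h by (cases i) auto
      qed
    qed
    then show ?thesis using Cons.IH unfolding Cons by simp
  qed
qed simp

lemma valid_nth: "valid a \<longleftrightarrow> (a \<noteq> [] \<longrightarrow> a!0 = 0) \<and> (\<forall>r. Suc r < length a \<longrightarrow> a!(Suc r) \<le> Suc (a!r))"
  unfolding valid_def succ_nth by (cases a) auto

lemma valid_le: "valid a \<Longrightarrow> r < length a \<Longrightarrow> a!r \<le> r"
proof (induction r)
  case 0 then show ?case by (auto simp: valid_nth)
next
  case (Suc r) then show ?case by (auto simp: valid_nth)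
qed

definition Hs :: "nat \<Rightarrow> nat list \<Rightarrow> nat set" where
  "Hs s a = (\<Union>r<length a. (\<lambda>q. q*s + r) ` {..<a!r})"

lemma Hs_mem:
  assumes "length a = s" "0 < s"
  shows "x \<in> Hs s a \<longleftrightarrow> x div s < a!(x mod s)"
proof
  assume "x \<in> Hs s a"
  then obtain r q where "r < s" "q < a!r" "x = q*s + r" unfolding Hs_def using assms by auto
  then show "x div s < a!(x mod s)" by simp
next
  assume "x div s < a!(x mod s)"
  moreover have "x mod s < length a" using assms by simp
  moreover have "x = (x div s)*s + x mod s" by simp
  ultimately show "x \<in> Hs s a" unfolding Hs_def by blast
qed

lemma Hs_mem2:
  assumes "length a = s" "0 < s" "r < s"
  shows "q*s + r \<in> Hs s a \<longleftrightarrow> q < a!r"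
  using Hs_mem[OF assms(1,2), of "q*s+r"] assms(3) by simp

lemma sum_upto_choose: "(\<Sum>q<n. q) = n choose 2"
  by (induction n) (auto simp: choose2_Suc)

lemma ws_nth: "ws a = (\<Sum>r<length a. r * a!r)"
proof (induction a)
  case (Cons x xs)
  have "(\<Sum>r<length (x#xs). r * (x#xs)!r) = (\<Sum>r<length xs. Suc r * xs!r)"
    by (simp add: sum.lessThan_Suc_shift del: sum.lessThan_Suc)
  also have "\<dots> = ws xs + sum_list xs"
    using Cons by (simp add: sum.distrib sum_list_sum_nth atLeast0LessThan)
  finally show ?case by simp
qed simp

lemma Hs_card_sum:
  assumes "length a = s" "0 < s"
  shows "finite (Hs s a) \<and> card (Hs s a) = sum_list a \<and> \<Sum>(Hs s a) = s * sa a + ws a"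
proof -
  have inj: "\<And>r. inj_on (\<lambda>q. q*s + r) {..<a!r}" using assms by (auto intro: inj_onI)
  have disj: "\<forall>r\<in>{..<length a}. \<forall>r'\<in>{..<length a}. r \<noteq> r' \<longrightarrow>
      (\<lambda>q. q*s + r) ` {..<a!r} \<inter> (\<lambda>q. q*s + r') ` {..<a!r'} = {}"
  proof (intro ballI impI)
    fix r r' assume "r \<in> {..<length a}" "r' \<in> {..<length a}" "r \<noteq> r'"
    then show "(\<lambda>q. q*s + r) ` {..<a!r} \<inter> (\<lambda>q. q*s + r') ` {..<a!r'} = {}"
      using assms by auto (metis mod_mult_self3 mod_less)
  qed
  have fin: "finite (Hs s a)" unfolding Hs_def by simp
  have "card (Hs s a) = (\<Sum>r<length a. card ((\<lambda>q. q*s + r) ` {..<a!r}))"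
    unfolding Hs_def by (rule card_UN_disjoint) (use disj in auto)
  also have "\<dots> = (\<Sum>r<length a. a!r)" using inj by (simp add: card_image)
  also have "\<dots> = sum_list a" by (simp add: sum_list_sum_nth atLeast0LessThan)
  finally have c: "card (Hs s a) = sum_list a" .
  have "\<Sum>(Hs s a) = (\<Sum>r<length a. \<Sum>((\<lambda>q. q*s + r) ` {..<a!r}))"
    unfolding Hs_def by (rule sum.UNION_disjoint) (use disj in auto)
  also have "\<dots> = (\<Sum>r<length a. \<Sum>q<a!r. q*s + r)"
    using inj by (simp add: sum.reindex)
  also have "\<dots> = (\<Sum>r<length a. s * (a!r choose 2) + r * a!r)"
    by (simp add: sum.distrib sum_distrib_right[symmetric] sum_upto_choose mult.commute)
  also have "\<dots> = s * sa a + ws a"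
    unfolding ws_nth sa_def by (simp add: sum.distrib sum_distrib_left sum_list_sum_nth atLeast0LessThan)
  finally show ?thesis using fin c by simp
qed

lemma Hs_props:
  assumes a: "a \<in> CL s" and s: "0 < s"
  shows "finite (Hs s a) \<and> 0 \<notin> Hs s a \<and>
    (\<forall>b\<in>Hs s a. s \<le> b \<longrightarrow> b - s \<in> Hs s a) \<and>
    (\<forall>b\<in>Hs s a. s + 1 \<le> b \<longrightarrow> b - (s + 1) \<in> Hs s a)"
proof -
  have la: "length a = s" and va: "valid a" using a unfolding CL_def by auto
  have a0: "a!0 = 0" using va la s unfolding valid_nth by auto
  have step: "\<And>r. Suc r < s \<Longrightarrow> a!(Suc r) \<le> Suc (a!r)" using va la unfolding valid_nth by auto
  have fin: "finite (Hs s a)" using Hs_card_sum[OF la s] by simp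
  have n0: "0 \<notin> Hs s a" using Hs_mem[OF la s, of 0] a0 s by simp
  have c1: "\<forall>b\<in>Hs s a. s \<le> b \<longrightarrow> b - s \<in> Hs s a"
  proof (intro ballI impI)
    fix b assume b: "b \<in> Hs s a" "s \<le> b"
    then obtain q r where qr: "r < s" "q < a!r" "b = q*s + r" unfolding Hs_def using la by auto
    have "q \<noteq> 0" using qr b(2) by (cases q) auto
    then obtain q' where q': "q = Suc q'" by (cases q) auto
    have "b - s = q'*s + r" using qr q' by simp
    moreover have "q' < a!r" using qr q' by simp
    ultimately show "b - s \<in> Hs s a" using Hs_mem2[OF la s qr(1)] by simp
  qed
  have c2: "\<forall>b\<in>Hs s a. s + 1 \<le> b \<longrightarrow> b - (s + 1) \<in> Hs s a"
  proof (intro ballI impI)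
    fix b assume b: "b \<in> Hs s a" "s + 1 \<le> b"
    then obtain q r where qr: "r < s" "q < a!r" "b = q*s + r" unfolding Hs_def using la by auto
    have "q \<noteq> 0" using qr b(2) by (cases q) auto
    then obtain q' where q': "q = Suc q'" by (cases q) auto
    have "r \<noteq> 0" using qr a0 by (cases r) auto
    then obtain r' where r': "r = Suc r'" by (cases r) auto
    have "b - (s + 1) = q'*s + r'" using qr q' r' by simp
    moreover have "q' < a!r'" using qr q' r' step[of r'] by simp
    moreover have "r' < s" using qr r' by simp
    ultimately show "b - (s + 1) \<in> Hs s a" using Hs_mem2[OF la s] by simp
  qed
  show ?thesis using fin n0 c1 c2 by blast
qed

lemma downclosed:
  fixes A :: "nat set"
  assumes "finite A" "\<And>q q'. q \<in> A \<Longrightarrow> q' \<le> q \<Longrightarrow> q' \<in> A"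
  shows "A = {..<card A}"
proof (cases "A = {}")
  case False
  have "A = {..Max A}"
  proof
    show "A \<subseteq> {..Max A}" using assms(1) by auto
    show "{..Max A} \<subseteq> A" using assms(2) Max_in[OF assms(1) False] by auto
  qed
  then show ?thesis by (metis card_atMost lessThan_Suc_atMost)
qed simp

lemma core_to_seq:
  assumes P: "is_partition la" and s: "0 < s"
    and c1: "is_core s la" and c2: "is_core (s+1) la"
  shows "\<exists>a\<in>CL s. Hs s a = beta la"
proof -
  define H where "H = beta la"
  have fH: "finite H" unfolding H_def beta_def by simp
  have H0: "0 \<notin> H"
  proof
    assume "0 \<in> H"
    then obtain k where "k < length la" "bet la k = 0" unfolding H_def beta_def by auto
    then show False using bet_pos[OF P, of k] by simp
  qed
  have cl1: "\<And>b. b \<in> H \<Longrightarrow> s \<le> b \<Longrightarrow> b - s \<in> H"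
    using c1 core_iff[OF P, of s] s unfolding H_def by auto
  have cl2: "\<And>b. b \<in> H \<Longrightarrow> s + 1 \<le> b \<Longrightarrow> b - (s + 1) \<in> H"
    using c2 core_iff[OF P, of "s+1"] unfolding H_def by auto
  define Q where "Q r = {q. q*s + r \<in> H}" for r
  have Qdown: "q' \<in> Q r" if "q \<in> Q r" "q' \<le> q" for q q' r
    using that
  proof (induction q arbitrary: q')
    case 0 then show ?case by simp
  next
    case (Suc q)
    show ?case
    proof (cases "q' = Suc q")
      case False
      then have "q' \<le> q" using Suc by simp
      moreover have "q \<in> Q r"
      proof -
        have h: "Suc q * s + r \<in> H" using Suc unfolding Q_def by simp
        have "s \<le> Suc q * s + r" by simp
        then have "Suc q * s + r - s \<in> H" using cl1 h by blast
        moreover have "Suc q * s + r - s = q * s + r" by simp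
        ultimately show ?thesis unfolding Q_def by simp
      qed
      ultimately show ?thesis using Suc by simp
    qed (use Suc in simp)
  qed
  have Qfin: "finite (Q r)" for r
  proof -
    have "Q r \<subseteq> {..Max H}"
    proof
      fix q assume "q \<in> Q r"
      then have "q*s + r \<in> H" unfolding Q_def by simp
      then have "q*s + r \<le> Max H" using fH by simp
      moreover have "q \<le> q*s" using s by simp
      ultimately have "q \<le> Max H" by linarith
      then show "q \<in> {..Max H}" by simp
    qed
    then show ?thesis by (rule finite_subset) simp
  qed
  have Qeq: "Q r = {..<card (Q r)}" for r
    by (rule downclosed[OF Qfin]) (use Qdown in blast)
  define a where "a = map (\<lambda>r. card (Q r)) [0..<s]"
  have la: "length a = s" unfolding a_def by simp
  have an: "\<And>r. r < s \<Longrightarrow> a!r = card (Q r)" unfolding a_def by simp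
  have memQ: "\<And>q r. r < s \<Longrightarrow> q*s + r \<in> H \<longleftrightarrow> q < a!r"
  proof -
    fix q r assume "r < s"
    have "q*s + r \<in> H \<longleftrightarrow> q \<in> Q r" unfolding Q_def by simp
    also have "\<dots> \<longleftrightarrow> q < card (Q r)" by (subst Qeq) simp
    finally show "q*s + r \<in> H \<longleftrightarrow> q < a!r" using an \<open>r < s\<close> by simp
  qed
  have a0: "a!0 = 0"
  proof (rule ccontr)
    assume "a!0 \<noteq> 0"
    then have "0*s + 0 \<in> H" using memQ[of 0 0] s by simp
    then show False using H0 by simp
  qed
  have astep: "a!(Suc r) \<le> Suc (a!r)" if r: "Suc r < s" for r
  proof (rule ccontr)
    assume "\<not> ?thesis"
    then have g: "Suc (Suc (a!r)) \<le> a!(Suc r)" by simp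
    define q where "q = Suc (a!r)"
    have "q*s + Suc r \<in> H" using memQ[OF r, of q] g unfolding q_def by simp
    moreover have "s + 1 \<le> q*s + Suc r" unfolding q_def by simp
    ultimately have "q*s + Suc r - (s+1) \<in> H" using cl2 by blast
    moreover have "q*s + Suc r - (s+1) = (a!r)*s + r" unfolding q_def by simp
    ultimately have "a!r * s + r \<in> H" by simp
    then show False using memQ[of r "a!r"] r by simp
  qed
  have va: "valid a" unfolding valid_nth using a0 astep la by simp
  have "Hs s a = H"
  proof
    show "Hs s a \<subseteq> H"
    proof
      fix x assume "x \<in> Hs s a"
      then have "x div s < a!(x mod s)" using Hs_mem[OF la s] by simp
      then have "(x div s)*s + x mod s \<in> H" using memQ[of "x mod s" "x div s"] s by simp
      then show "x \<in> H" by simp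
    qed
    show "H \<subseteq> Hs s a"
    proof
      fix x assume "x \<in> H"
      then have "(x div s)*s + x mod s \<in> H" by simp
      then have "x div s < a!(x mod s)" using memQ[of "x mod s" "x div s"] s by simp
      then show "x \<in> Hs s a" using Hs_mem[OF la s] by simp
    qed
  qed
  moreover have "a \<in> CL s" unfolding CL_def using la va by simp
  ultimately show ?thesis unfolding H_def by blast
qed


lemma lin1: "(2::real) * A = 2 * x + B \<Longrightarrow> x = A - B / 2" by linarith
lemma lin2: "(12::real) * A - 6 * B = C \<Longrightarrow> A - B / 2 = C / 12" by linarith

lemma psize_g:
  assumes a: "a \<in> CL s" and s: "0 < s"
  shows "real (psize (toPart (Hs s a))) =
    real s * real (sa a) + real (ws a) - ((real (sum_list a))^2 - real (sum_list a)) / 2"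
proof -
  have la: "length a = s" using a unfolding CL_def by simp
  obtain fin: "finite (Hs s a)" and n0: "0 \<notin> Hs s a" using Hs_props[OF a s] by blast
  have cs: "card (Hs s a) = sum_list a" and ss: "\<Sum>(Hs s a) = s * sa a + ws a"
    using Hs_card_sum[OF la s] by auto
  define la where "la = toPart (Hs s a)"
  have P: "is_partition la" and B: "beta la = Hs s a" using beta_toPart[OF fin n0] unfolding la_def by auto
  have m: "length la = sum_list a" using card_beta[OF P] B cs by simp
  have "2 * (s * sa a + ws a) = 2 * psize la + sum_list a * (sum_list a - 1)"
    using sum_beta[OF P] B ss m by simp
  then have e: "2 * real (s * sa a + ws a) = 2 * real (psize la) + real (sum_list a * (sum_list a - 1))"
    by (metis of_nat_add of_nat_mult of_nat_numeral)
  have f: "real (sum_list a * (sum_list a - 1)) = (real (sum_list a))^2 - real (sum_list a)"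
    by (cases "sum_list a") (simp_all add: power2_eq_square algebra_simps)
  have e2: "2 * (real s * real (sa a) + real (ws a)) = 2 * real (psize la) + ((real (sum_list a))^2 - real (sum_list a))"
    using e f by simp
  show ?thesis using lin1[OF e2] unfolding la_def by simp
qed

theorem theorem2p3:
  fixes s :: nat
  assumes "s \<ge> 1"
  shows "finite {la. is_partition la \<and> is_core s la \<and> is_core (s + 1) la} \<and>
         real (\<Sum>la\<in>{la. is_partition la \<and> is_core s la \<and> is_core (s + 1) la}. psize la)
           = real s * (real s - 1) / 12 * real ((2 * s) choose s)"
proof -
  have s: "0 < s" using assms by simp
  define Cores where "Cores = {la. is_partition la \<and> is_core s la \<and> is_core (s + 1) la}"
  define g where "g a = toPart (Hs s a)" for a
  have img: "Cores = g ` CL s"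
  proof
    show "Cores \<subseteq> g ` CL s"
    proof
      fix la assume "la \<in> Cores"
      then have P: "is_partition la" and c1: "is_core s la" and c2: "is_core (s+1) la"
        unfolding Cores_def by auto
      obtain a where a: "a \<in> CL s" "Hs s a = beta la" using core_to_seq[OF P s c1 c2] by blast
      have "la = g a" unfolding g_def a(2) toPart_beta[OF P] ..
      then show "la \<in> g ` CL s" using a(1) by blast
    qed
    show "g ` CL s \<subseteq> Cores"
    proof
      fix x assume "x \<in> g ` CL s"
      then obtain a where a: "a \<in> CL s" and x: "x = g a" by blast
      obtain fin: "finite (Hs s a)" and n0: "0 \<notin> Hs s a"
        and cl1: "\<forall>b\<in>Hs s a. s \<le> b \<longrightarrow> b - s \<in> Hs s a"
        and cl2: "\<forall>b\<in>Hs s a. s + 1 \<le> b \<longrightarrow> b - (s + 1) \<in> Hs s a"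
        using Hs_props[OF a s] by blast
      have P: "is_partition x" and B: "beta x = Hs s a"
        using beta_toPart[OF fin n0] unfolding x g_def by auto
      have "is_core s x" using core_iff[OF P, of s] assms cl1 B by simp
      moreover have "is_core (s+1) x" using core_iff[OF P, of "s+1"] cl2 B by simp
      ultimately show "x \<in> Cores" unfolding Cores_def using P by simp
    qed
  qed
  have inj: "inj_on g (CL s)"
  proof (rule inj_onI)
    fix a a' assume a: "a \<in> CL s" and a': "a' \<in> CL s" and e: "g a = g a'"
    have la: "length a = s" and la': "length a' = s" using a a' unfolding CL_def by auto
    have H: "Hs s a = Hs s a'"
    proof -
      obtain fin: "finite (Hs s a)" and n0: "0 \<notin> Hs s a" using Hs_props[OF a s] by blast
      obtain fin': "finite (Hs s a')" and n0': "0 \<notin> Hs s a'" using Hs_props[OF a' s] by blast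
      have "Hs s a = beta (g a)" using beta_toPart[OF fin n0] unfolding g_def by simp
      also have "\<dots> = beta (g a')" using e by simp
      also have "\<dots> = Hs s a'" using beta_toPart[OF fin' n0'] unfolding g_def by simp
      finally show ?thesis .
    qed
    show "a = a'"
    proof (rule nth_equalityI)
      show "length a = length a'" using la la' by simp
      fix r assume "r < length a"
      then have r: "r < s" using la by simp
      have iff: "\<And>q. q < a!r \<longleftrightarrow> q < a'!r"
        using Hs_mem2[OF la s r] Hs_mem2[OF la' s r] H by simp
      show "a!r = a'!r"
      proof (rule ccontr)
        assume "a!r \<noteq> a'!r"
        then consider "a!r < a'!r" | "a'!r < a!r" by arith
        then show False
        proof cases
          case 1 then show False using iff[of "a!r"] by simp
        next
          case 2 then show False using iff[of "a'!r"] by simp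
        qed
      qed
    qed
  qed
  have fin: "finite Cores" unfolding img using finite_CL by simp
  have "real (\<Sum>la\<in>Cores. psize la) = (\<Sum>la\<in>Cores. real (psize la))" by simp
  also have "\<dots> = (\<Sum>a\<in>CL s. real (psize (g a)))"
    unfolding img using sum.reindex[OF inj] by simp
  also have "\<dots> = (\<Sum>a\<in>CL s. real s * real (sa a) + real (ws a) - ((real (sum_list a))^2 - real (sum_list a)) / 2)"
    by (rule sum.cong[OF refl]) (use psize_g s in \<open>simp add: g_def\<close>)
  also have "\<dots> = real s * ta s + tb s - (t2 s - t1 s) / 2"
    unfolding ta_def tb_def t1_def t2_def
    by (simp add: sum.distrib sum_subtractf sum_distrib_left flip: sum_divide_distrib)
  also have "\<dots> = (real s ^ 2 - real s) * real ((2*s) choose s) / 12"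
    using lin2[OF total_gf[of s]] by simp
  also have "\<dots> = real s * (real s - 1) / 12 * real ((2 * s) choose s)"
    by (simp add: power2_eq_square algebra_simps)
  finally show ?thesis using fin unfolding Cores_def by simp
qed


end
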